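(* Let $\sigma_n(s):=-H_n\!\left(-\frac{s}{n^2}\right)$, and suppose that, as $n\to\infty$ with $s$ fixed (so $t=-s/n^2\to0$), $\sigma_n(s)$ together with its first and second derivatives in $s$ converge to a twice differentiable function $\sigma(s)$ and its derivatives. Then $\sigma$ satisfies the Jimbo–Miwa–Okamoto $\sigma$-form of Painlevé III $$(s\sigma''(s))^2=4\sigma'(s)(\sigma'(s)-1)(\sigma(s)-s\sigma'(s))+(\nu_1\sigma'(s)-\nu_2)^2,\qquad \nu_1=\alpha+\gamma,\ \nu_2=\gamma.$$
   Context: Fix $\alpha,\beta,\gamma>0$ and real constants $A,B$ with $A\ge0$, $A+B\ge0$, not both $A$ and $A+B$ equal to $0$. Let $\theta$ be the Heaviside function. For $t$ put $w(x,t)=x^{\alpha}(1-x)^{\beta}|x-t|^{\gamma}(A+B\theta(x-t))$ on $[0,1]$, let $D_n(t)=\det\left(\int_0^1x^{i+j}w(x,t)dx\right)_{i,j=0}^{n-1}$, and $H_n(t)=t(t-1)\frac{d}{dt}\ln D_n(t)$; $H_n$ satisfies the second-order ODE (in $t$) $t^2(t-1)^2(H_n'')^2+4t(t-1)(H_n')^3-\{4(2t-1)H_n+[4n^2+4n(\alpha+\beta+\gamma)+(\alpha+\beta)^2]t^2-2[2n^2+2n(\alpha+\beta+\gamma)+\alpha(\alpha+\gamma)+\beta(\alpha-\gamma)]t+(\alpha+\gamma)^2\}(H_n')^2+2\{2H_n^2+[(4n^2+4n(\alpha+\beta+\gamma)+(\alpha+\beta)^2)t-2n^2-2n(\alpha+\beta+\gamma)-\alpha(\alpha+\gamma)-\beta(\alpha-\gamma)]H_n-n\gamma(n+\alpha+\beta+\gamma)[(\alpha-\beta)t-\alpha-\gamma]\}H_n'-[4n^2+4n(\alpha+\beta+\gamma)+(\alpha+\beta)^2]H_n^2+2n\gamma(\alpha-\beta)(n+\alpha+\beta+\gamma)H_n-n^2\gamma^2(n+\alpha+\beta+\gamma)^2=0$,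 and the theorem concerns the double-scaling limit of this equation. *)

theory Defs
  imports "HOL-Analysis.Analysis"
begin

text \<open>Left-hand side of the second-order ODE satisfied by H_n(t), written with
  h = H_n(t), h1 = H_n'(t), h2 = H_n''(t) and N = n.\<close>
definition ode_lhs :: "real \<Rightarrow> real \<Rightarrow> real \<Rightarrow> real \<Rightarrow> real \<Rightarrow> real \<Rightarrow> real \<Rightarrow> real \<Rightarrow> real" where
  "ode_lhs N \<alpha> \<beta> \<gamma> t h h1 h2 =
     t^2 * (t - 1)^2 * h2^2 + 4 * t * (t - 1) * h1^3
   - (4 * (2*t - 1) * h
      + (4*N^2 + 4*N*(\<alpha>+\<beta>+\<gamma>) + (\<alpha>+\<beta>)^2) * t^2
      - 2 * (2*N^2 + 2*N*(\<alpha>+\<beta>+\<gamma>) + \<alpha>*(\<alpha>+\<gamma>) + \<beta>*(\<alpha>-\<gamma>)) * t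
      + (\<alpha>+\<gamma>)^2) * h1^2
   + 2 * (2 * h^2
      + ((4*N^2 + 4*N*(\<alpha>+\<beta>+\<gamma>) + (\<alpha>+\<beta>)^2) * t
         - 2*N^2 - 2*N*(\<alpha>+\<beta>+\<gamma>) - \<alpha>*(\<alpha>+\<gamma>) - \<beta>*(\<alpha>-\<gamma>)) * h
      - N * \<gamma> * (N+\<alpha>+\<beta>+\<gamma>) * ((\<alpha>-\<beta>) * t - \<alpha> - \<gamma>)) * h1
   - (4*N^2 + 4*N*(\<alpha>+\<beta>+\<gamma>) + (\<alpha>+\<beta>)^2) * h^2
   + 2 * N * \<gamma> * (\<alpha>-\<beta>) * (N+\<alpha>+\<beta>+\<gamma>) * h
   - N^2 * \<gamma>^2 * (N+\<alpha>+\<beta>+\<gamma>)^2"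

definition sigma_n :: "(nat \<Rightarrow> real \<Rightarrow> real) \<Rightarrow> nat \<Rightarrow> real \<Rightarrow> real" where
  "sigma_n H n s = - H n (- s / (real n)^2)"

end

theory Submission
  imports Defs
begin

definition P :: "real \<Rightarrow> real \<Rightarrow> real \<Rightarrow> real \<Rightarrow> real \<Rightarrow> real \<Rightarrow> real \<Rightarrow> real \<Rightarrow> real" where
 "P \<alpha> \<beta> \<gamma> s x a b c = (let k = 4 + 4*(\<alpha>+\<beta>+\<gamma>)*x + (\<alpha>+\<beta>)^2*x^2;
      l = 2 + 2*(\<alpha>+\<beta>+\<gamma>)*x + (\<alpha>*(\<alpha>+\<gamma>) + \<beta>*(\<alpha>-\<gamma>))*x^2;
      q = \<gamma>*(1 + (\<alpha>+\<beta>+\<gamma>)*x) in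
   s^2*(1+s*x^2)^2*c^2 + 4* s*(1+s*x^2)*b^3
   - (4*a*(1+2* s*x^2) + k* s^2*x^2 + 2*l* s + (\<alpha>+\<gamma>)^2)*b^2
   + 2*(2*a^2*x^2 + a*(k* s*x^2+l) + q*((\<alpha>-\<beta>)* s*x^2 + \<alpha> + \<gamma>))*b
   - k*x^2*a^2 - 2*(\<alpha>-\<beta>)*q*x^2*a - q^2)"

lemma P_id: assumes "N * x = 1"
  shows "x^4 * ode_lhs N \<alpha> \<beta> \<gamma> (-s*x^2) (-a) (N^2*b) (-(N^4*c)) = P \<alpha> \<beta> \<gamma> s x a b c"
  using assms unfolding ode_lhs_def P_def Let_def by algebra


lemma D1:
  fixes H :: "nat \<Rightarrow> real \<Rightarrow> real"
  assumes H_diff: "\<And>n t. n \<ge> 1 \<Longrightarrow> t \<noteq> 0 \<Longrightarrow> t \<noteq> 1 \<Longrightarrow>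
                    H n differentiable at t \<and> deriv (H n) differentiable at t"
    and n: "n \<ge> 1" and u: "u \<noteq> 0" "u \<noteq> - ((real n)^2)"
  shows "((\<lambda>u. - H n (-u/(real n)^2)) has_real_derivative deriv (H n) (-u/(real n)^2) / (real n)^2) (at u)"
    "((\<lambda>u. deriv (H n) (-u/(real n)^2) / (real n)^2) has_real_derivative - deriv (deriv (H n)) (-u/(real n)^2) / (real n)^4) (at u)"
proof -
  have np: "(real n)^2 > 0" using n by simp
  have t0: "-u/(real n)^2 \<noteq> 0" using u np by simp
  have t1: "-u/(real n)^2 \<noteq> 1" using u np by (simp add: field_simps)
  have d: "H n differentiable at (-u/(real n)^2)" "deriv (H n) differentiable at (-u/(real n)^2)"
    using H_diff[OF n t0 t1] by auto
  have g: "((\<lambda>u. -u/(real n)^2) has_real_derivative (-1/(real n)^2)) (at u)"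
  proof -
    have "(real n)^4 = (real n)^2*(real n)^2" by algebra
    then show ?thesis using np by (auto intro!: derivative_eq_intros simp: field_simps)
  qed
  have A: "((\<lambda>u. H n (-u/(real n)^2)) has_real_derivative deriv (H n) (-u/(real n)^2) * (-1/(real n)^2)) (at u)"
    by (rule DERIV_chain2[OF _ g]) (use d in \<open>simp add: DERIV_deriv_iff_real_differentiable\<close>)
  have B: "((\<lambda>u. deriv (H n) (-u/(real n)^2)) has_real_derivative deriv (deriv (H n)) (-u/(real n)^2) * (-1/(real n)^2)) (at u)"
    by (rule DERIV_chain2[OF _ g]) (use d in \<open>simp add: DERIV_deriv_iff_real_differentiable\<close>)
  show "((\<lambda>u. - H n (-u/(real n)^2)) has_real_derivative deriv (H n) (-u/(real n)^2) / (real n)^2) (at u)"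
    using DERIV_minus[OF A] by simp
  have "((\<lambda>u. deriv (H n) (-u/(real n)^2) / (real n)^2) has_real_derivative deriv (deriv (H n)) (-u/(real n)^2) * (-1/(real n)^2) / (real n)^2) (at u)"
    by (rule DERIV_cdivide[OF B])
  then show "((\<lambda>u. deriv (H n) (-u/(real n)^2) / (real n)^2) has_real_derivative - deriv (deriv (H n)) (-u/(real n)^2) / (real n)^4) (at u)"
  proof -
    have "(real n)^4 = (real n)^2*(real n)^2" by algebra
    then show ?thesis using np \<open>((\<lambda>u. deriv (H n) (-u/(real n)^2) / (real n)^2) has_real_derivative deriv (deriv (H n)) (-u/(real n)^2) * (-1/(real n)^2) / (real n)^2) (at u)\<close> by (simp add: field_simps)
  qed
qed

theorem theorem4p1:
  fixes \<alpha> \<beta> \<gamma> A B :: real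
    and H :: "nat \<Rightarrow> real \<Rightarrow> real"
    and \<sigma> :: "real \<Rightarrow> real"
    and s :: real
  assumes par: "\<alpha> > 0" "\<beta> > 0" "\<gamma> > 0" "A \<ge> 0" "A + B \<ge> 0" "\<not> (A = 0 \<and> A + B = 0)"
    and H_diff: "\<And>n t. n \<ge> 1 \<Longrightarrow> t \<noteq> 0 \<Longrightarrow> t \<noteq> 1 \<Longrightarrow>
                    H n differentiable at t \<and> deriv (H n) differentiable at t"
    and H_ode: "\<And>n t. n \<ge> 1 \<Longrightarrow> t \<noteq> 0 \<Longrightarrow> t \<noteq> 1 \<Longrightarrow>
                    ode_lhs (real n) \<alpha> \<beta> \<gamma> t (H n t) (deriv (H n) t) (deriv (deriv (H n)) t) = 0"
    and s_ne: "s \<noteq> 0"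
    and sigma_diff: "\<forall>\<^sub>F u in nhds s. \<sigma> differentiable at u"
    and sigma_diff2: "deriv \<sigma> differentiable at s"
    and lim0: "(\<lambda>n. sigma_n H n s) \<longlonglongrightarrow> \<sigma> s"
    and lim1: "(\<lambda>n. deriv (sigma_n H n) s) \<longlonglongrightarrow> deriv \<sigma> s"
    and lim2: "(\<lambda>n. deriv (deriv (sigma_n H n)) s) \<longlonglongrightarrow> deriv (deriv \<sigma>) s"
  shows "(s * deriv (deriv \<sigma>) s)^2
           = 4 * deriv \<sigma> s * (deriv \<sigma> s - 1) * (\<sigma> s - s * deriv \<sigma> s)
             + ((\<alpha> + \<gamma>) * deriv \<sigma> s - \<gamma>)^2"
proof -
  have ev: "eventually (\<lambda>n. P \<alpha> \<beta> \<gamma> s (1/real n) (sigma_n H n s) (deriv (sigma_n H n) s) (deriv (deriv (sigma_n H n)) s) = 0) sequentially"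
  proof -
    obtain N :: nat where N: "real N > \<bar>s\<bar>" using reals_Archimedean2 by blast
    show ?thesis unfolding eventually_sequentially
    proof (intro exI allI impI)
      fix n assume nN: "Suc N \<le> n"
      have n1: "n \<ge> 1" using nN by simp
      have "real n > \<bar>s\<bar>" using nN N by linarith
      moreover have "real n \<le> (real n)^2" using n1 by (simp add: power2_eq_square)
      ultimately have sn: "s \<noteq> - ((real n)^2)" by linarith
      define t where "t = -s/(real n)^2"
      have np: "(real n)^2 > 0" using n1 by simp
      have t0: "t \<noteq> 0" using s_ne np by (simp add: t_def)
      have t1: "t \<noteq> 1" using sn np by (simp add: t_def field_simps)
      have sfun: "sigma_n H n = (\<lambda>u. - H n (-u/(real n)^2))" by (simp add: sigma_n_def fun_eq_iff)
      have e1: "deriv (sigma_n H n) s = deriv (H n) t / (real n)^2"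
        unfolding sfun t_def by (rule DERIV_imp_deriv[OF D1(1)[OF H_diff n1 s_ne sn]])
      have evn: "eventually (\<lambda>u. u \<noteq> 0 \<and> u \<noteq> - ((real n)^2)) (nhds s)"
        using t1_space_nhds[OF s_ne] t1_space_nhds[OF sn] by (auto elim: eventually_elim2)
      have "eventually (\<lambda>u. deriv (sigma_n H n) u = deriv (H n) (-u/(real n)^2) / (real n)^2) (nhds s)"
        using evn proof eventually_elim
        case (elim u)
        show ?case unfolding sfun
          by (rule DERIV_imp_deriv[OF D1(1)[OF H_diff n1]]) (use elim in auto)
      qed
      then have "deriv (deriv (sigma_n H n)) s = deriv (\<lambda>u. deriv (H n) (-u/(real n)^2) / (real n)^2) s"
        by (rule deriv_cong_ev) simp
      also have "\<dots> = - deriv (deriv (H n)) t / (real n)^4"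
        unfolding t_def by (rule DERIV_imp_deriv[OF D1(2)[OF H_diff n1 s_ne sn]])
      finally have e2: "deriv (deriv (sigma_n H n)) s = - deriv (deriv (H n)) t / (real n)^4" .
      have e0: "sigma_n H n s = - H n t" by (simp add: sigma_n_def t_def)
      have tt: "t = -s * (1/real n)^2" by (simp add: t_def field_simps)
      have ode: "ode_lhs (real n) \<alpha> \<beta> \<gamma> t (H n t) (deriv (H n) t) (deriv (deriv (H n)) t) = 0"
        using H_ode[OF n1 t0 t1] .
      have "(1/real n)^4 * ode_lhs (real n) \<alpha> \<beta> \<gamma> (-s*(1/real n)^2) (-(sigma_n H n s))
              ((real n)^2 * deriv (sigma_n H n) s) (-((real n)^4 * deriv (deriv (sigma_n H n)) s))
            = P \<alpha> \<beta> \<gamma> s (1/real n) (sigma_n H n s) (deriv (sigma_n H n) s) (deriv (deriv (sigma_n H n)) s)"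
        by (rule P_id) (use n1 in simp)
      moreover have "ode_lhs (real n) \<alpha> \<beta> \<gamma> (-s*(1/real n)^2) (-(sigma_n H n s))
              ((real n)^2 * deriv (sigma_n H n) s) (-((real n)^4 * deriv (deriv (sigma_n H n)) s)) = 0"
        unfolding tt[symmetric] e0 e1 e2 using ode np by simp
      ultimately show "P \<alpha> \<beta> \<gamma> s (1/real n) (sigma_n H n s) (deriv (sigma_n H n) s) (deriv (deriv (sigma_n H n)) s) = 0"
        by simp
    qed
  qed
  have x0: "(\<lambda>n. 1 / real n) \<longlonglongrightarrow> 0"
    using lim_inverse_n by (simp add: inverse_eq_divide)
  have lim: "(\<lambda>n. P \<alpha> \<beta> \<gamma> s (1/real n) (sigma_n H n s) (deriv (sigma_n H n) s) (deriv (deriv (sigma_n H n)) s))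
     \<longlonglongrightarrow> P \<alpha> \<beta> \<gamma> s 0 (\<sigma> s) (deriv \<sigma> s) (deriv (deriv \<sigma>) s)"
    unfolding P_def Let_def
    by (intro tendsto_intros x0 lim0 lim1 lim2)
  have lim': "(\<lambda>n. P \<alpha> \<beta> \<gamma> s (1/real n) (sigma_n H n s) (deriv (sigma_n H n) s) (deriv (deriv (sigma_n H n)) s))
     \<longlonglongrightarrow> 0"
    by (rule tendsto_eventually) (rule ev)
  have "P \<alpha> \<beta> \<gamma> s 0 (\<sigma> s) (deriv \<sigma> s) (deriv (deriv \<sigma>) s) = 0"
    using LIMSEQ_unique[OF lim lim'] .
  then show ?thesis
    unfolding P_def Let_def by (simp add: algebra_simps power2_eq_square power3_eq_cube)
qed

end
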